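(* Let $k\ge1$ and let $m$ be an integer such that $a_{k+1}q_k<m<q_{k+1}$. If $m\ne q_{k+1,a_{k+1}-1}$, and moreover $m\neq (a_{k+1}-1)q_k+2q_{k-1}$ in case $a_k=1$, then $\|m\alpha\|\ge\|q_{k-1}\alpha\|+(a_{k+1}+1)\|q_k\alpha\|$.
   Context: $\alpha\in(0,1)$ irrational, $\alpha=[0;a_1,a_2,\ldots]$ with positive integers $a_i$, $a_1\ge2$; $q_{-1}=0$, $q_0=1$, $q_1=a_1$, $q_k=a_kq_{k-1}+q_{k-2}$ ($k\ge2$). For $j\ge2$ and $1\le\ell<a_j$, $q_{j,\ell}=\ell q_{j-1}+q_{j-2}$ (denominators of semiconvergents). $\|x\|$ is the distance from $x$ to the nearest integer. *)

theory Defs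
  imports Complex_Main
begin

text \<open>Continued fraction expansion via the Gauss map:
  x_0 = x, x_{n+1} = frac (1 / x_n); partial quotient a_n = floor (1 / x_{n-1}) for n >= 1.
  For irrational x in (0,1) this gives x = [0; a_1, a_2, ...].\<close>

fun cf_rem :: "real \<Rightarrow> nat \<Rightarrow> real" where
  "cf_rem x 0 = x"
| "cf_rem x (Suc n) = frac (1 / cf_rem x n)"

definition cf_a :: "real \<Rightarrow> nat \<Rightarrow> nat" where
  "cf_a x n = nat \<lfloor>1 / cf_rem x (n - 1)\<rfloor>"

fun cf_q :: "real \<Rightarrow> nat \<Rightarrow> nat" where
  "cf_q x 0 = 1"
| "cf_q x (Suc 0) = cf_a x 1"
| "cf_q x (Suc (Suc k)) = cf_a x (Suc (Suc k)) * cf_q x (Suc k) + cf_q x k"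

definition cf_qs :: "real \<Rightarrow> nat \<Rightarrow> nat \<Rightarrow> nat" where
  "cf_qs x j l = l * cf_q x (j - 1) + cf_q x (j - 2)"

definition dnint :: "real \<Rightarrow> real" where
  "dnint y = min (frac y) (1 - frac y)"

end

theory Submission
  imports Defs
begin

fun cf_p :: "real \<Rightarrow> nat \<Rightarrow> int" where
  "cf_p x 0 = 0"
| "cf_p x (Suc 0) = 1"
| "cf_p x (Suc (Suc k)) = int (cf_a x (Suc (Suc k))) * cf_p x (Suc k) + cf_p x k"

lemma det_pq: "int (cf_q x (Suc n)) * cf_p x n - int (cf_q x n) * cf_p x (Suc n) = (-1)^(Suc n)"
proof (induction n)
  case 0 then show ?case by simp
next
  case (Suc n)
  then show ?case by (simp add: algebra_simps)
qed

lemma dnint_le: assumes "\<bar>y - of_int N\<bar> < 1" shows "dnint y \<le> \<bar>y - of_int N\<bar>"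
proof (cases "y \<ge> of_int N")
  case True
  then have "floor y = N" using assms by (intro floor_unique) auto
  then have "frac y = y - of_int N" by (simp add: frac_def)
  then show ?thesis using True by (simp add: dnint_def)
next
  case False
  then have "floor y = N - 1" using assms by (intro floor_unique) auto
  then have "frac y = y - of_int N + 1" by (simp add: frac_def)
  then show ?thesis using False by (simp add: dnint_def)
qed

lemma dnint_ge: assumes "\<And>N::int. \<bar>y - of_int N\<bar> \<ge> c" shows "dnint y \<ge> c"
proof -
  have "frac y = \<bar>y - of_int (floor y)\<bar>" by (simp add: frac_def)
  moreover have "1 - frac y = \<bar>y - of_int (floor y + 1)\<bar>"
    by (simp add: frac_def)
  ultimately show ?thesis using assms[of "floor y"] assms[of "floor y + 1"]
    by (simp add: dnint_def)
qed

lemma ge_helper: "(c::real) \<ge> 1 \<Longrightarrow> d > 0 \<Longrightarrow> c * d \<ge> d"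
  using mult_right_mono[of 1 c d] by simp

context
  fixes \<alpha> :: real
  assumes irr: "\<alpha> \<notin> \<rat>" and pos: "0 < \<alpha>" and lt1: "\<alpha> < 1"
begin

lemma rem_props: "cf_rem \<alpha> n \<notin> \<rat> \<and> 0 < cf_rem \<alpha> n \<and> cf_rem \<alpha> n < 1"
proof (induction n)
  case 0 thus ?case using irr pos lt1 by simp
next
  case (Suc n)
  define x where "x = cf_rem \<alpha> n"
  have x: "x \<notin> \<rat>" "0<x" "x<1" using Suc x_def by auto
  have i: "1/x \<notin> \<rat>" using x(1) by (metis Rats_inverse inverse_eq_divide inverse_inverse_eq)
  have f: "frac (1/x) \<notin> \<rat>"
  proof
    assume "frac (1/x) \<in> \<rat>"
    then have "frac (1/x) + of_int \<lfloor>1/x\<rfloor> \<in> \<rat>" by (intro Rats_add) auto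
    then show False using i by (simp add: frac_def)
  qed
  then have "frac (1/x) \<noteq> 0" by (metis Rats_0)
  then have "0 < frac (1/x)" using frac_ge_0[of "1/x"] by linarith
  then show ?case using f frac_lt_1[of "1/x"] by (simp add: x_def)
qed

lemma a_props: "real (cf_a \<alpha> (Suc n)) = 1 / cf_rem \<alpha> n - cf_rem \<alpha> (Suc n)"
  "cf_a \<alpha> (Suc n) \<ge> 1"
proof -
  define x where "x = cf_rem \<alpha> n"
  have x: "0<x" "x<1" using rem_props x_def by auto
  have "1 < 1/x" using x by simp
  then have fl: "\<lfloor>1/x\<rfloor> \<ge> 1" by (simp add: le_floor_iff)
  have "cf_a \<alpha> (Suc n) = nat \<lfloor>1/x\<rfloor>" by (simp add: cf_a_def x_def)
  then have e: "real (cf_a \<alpha> (Suc n)) = of_int \<lfloor>1/x\<rfloor>" using fl by (metis of_nat_nat of_int_of_nat_eq nat_0_le zero_le_one order_trans)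
  show "real (cf_a \<alpha> (Suc n)) = 1 / cf_rem \<alpha> n - cf_rem \<alpha> (Suc n)"
    using e by (simp add: x_def frac_def)
  show "cf_a \<alpha> (Suc n) \<ge> 1" using e fl by linarith
qed

definition dd :: "nat \<Rightarrow> real" where "dd n = (\<Prod>i\<le>n. cf_rem \<alpha> i)"

lemma dd_Suc: "dd (Suc n) = dd n * cf_rem \<alpha> (Suc n)"
  by (simp add: dd_def)

lemma dd_pos: "dd n > 0"
proof (induction n)
  case 0 show ?case using pos by (simp add: dd_def)
next
  case (Suc n) show ?case using Suc rem_props[of "Suc n"] by (simp add: dd_Suc)
qed

lemma dd_lt1: "dd n < 1"
proof (induction n)
  case 0 then show ?case using lt1 by (simp add: dd_def)
next
  case (Suc n)
  have "dd n * cf_rem \<alpha> (Suc n) < dd n * 1"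
    using dd_pos[of n] rem_props[of "Suc n"] by (intro mult_strict_left_mono) auto
  then show ?case using Suc by (simp add: dd_Suc)
qed

lemma dd_rec: "dd n = real (cf_a \<alpha> (n+2)) * dd (n+1) + dd (n+2)"
proof -
  define x1 where "x1 = cf_rem \<alpha> (Suc n)"
  define x2 where "x2 = cf_rem \<alpha> (Suc (Suc n))"
  have a: "real (cf_a \<alpha> (n+2)) = 1/x1 - x2" using a_props(1)[of "Suc n"] by (simp add: x1_def x2_def)
  have x1: "x1 > 0" using rem_props[of "Suc n"] unfolding x1_def by blast
  have d: "dd (n+1) = dd n * x1" "dd (n+2) = dd n * x1 * x2" by (simp_all add: dd_Suc x1_def x2_def)
  have h: "x1 * x2 + x1 * real (cf_a \<alpha> (n+2)) = 1" using a x1 by (simp add: field_simps)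
  have "dd n = dd n * (x1 * x2 + x1 * real (cf_a \<alpha> (n+2)))" using h by simp
  also have "\<dots> = real (cf_a \<alpha> (n+2)) * dd (n+1) + dd (n+2)" unfolding d by (simp add: algebra_simps)
  finally show ?thesis .
qed

lemma eps2: "real (cf_q \<alpha> n) * \<alpha> - of_int (cf_p \<alpha> n) = (-1)^n * dd n
  \<and> real (cf_q \<alpha> (Suc n)) * \<alpha> - of_int (cf_p \<alpha> (Suc n)) = (-1)^(Suc n) * dd (Suc n)"
proof (induction n)
  case 0
  have a: "real (cf_a \<alpha> 1) = 1/\<alpha> - cf_rem \<alpha> 1" using a_props(1)[of 0] by simp
  show ?case using a pos by (simp add: dd_def field_simps)
next
  case (Suc n)
  have r: "dd n = real (cf_a \<alpha> (n+2)) * dd (n+1) + dd (n+2)" by (rule dd_rec)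
  have "real (cf_q \<alpha> (Suc (Suc n))) * \<alpha> - of_int (cf_p \<alpha> (Suc (Suc n)))
     = real (cf_a \<alpha> (Suc (Suc n))) * (real (cf_q \<alpha> (Suc n)) * \<alpha> - of_int (cf_p \<alpha> (Suc n)))
       + (real (cf_q \<alpha> n) * \<alpha> - of_int (cf_p \<alpha> n))"
    by (simp add: algebra_simps)
  also have "\<dots> = real (cf_a \<alpha> (Suc (Suc n))) * ((-1)^(Suc n) * dd (Suc n)) + (-1)^n * dd n"
    using Suc.IH by (simp only:)
  also have "\<dots> = (-1)^n * (dd n - real (cf_a \<alpha> (n+2)) * dd (n+1))"
    by (simp add: algebra_simps)
  also have "\<dots> = (-1)^(Suc (Suc n)) * dd (Suc (Suc n))"
    using r by simp
  finally show ?case using Suc by simp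
qed

lemma eps: "real (cf_q \<alpha> n) * \<alpha> - of_int (cf_p \<alpha> n) = (-1)^n * dd n"
  using eps2 by blast

lemma q_pos2: "cf_q \<alpha> n \<ge> 1 \<and> cf_q \<alpha> (Suc n) \<ge> 1"
proof (induction n)
  case 0 then show ?case using a_props(2)[of 0] by simp
next
  case (Suc n) then show ?case by simp
qed

lemma q_pos: "cf_q \<alpha> n \<ge> 1" using q_pos2 by blast

lemma decomp: "\<exists>u v::int. s = u * int (cf_q \<alpha> n) + v * int (cf_q \<alpha> (Suc n))
   \<and> t = u * cf_p \<alpha> n + v * cf_p \<alpha> (Suc n)"
proof -
  define D where "D = int (cf_q \<alpha> (Suc n)) * cf_p \<alpha> n - int (cf_q \<alpha> n) * cf_p \<alpha> (Suc n)"
  have D2: "D * D = 1" unfolding D_def det_pq by (simp add: power_mult_distrib[symmetric])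
  define u where "u = - D * (s * cf_p \<alpha> (Suc n) - t * int (cf_q \<alpha> (Suc n)))"
  define v where "v = - D * (t * int (cf_q \<alpha> n) - s * cf_p \<alpha> n)"
  have "u * int (cf_q \<alpha> n) + v * int (cf_q \<alpha> (Suc n)) = D * D * s"
    unfolding u_def v_def D_def by (simp add: algebra_simps)
  moreover have "u * cf_p \<alpha> n + v * cf_p \<alpha> (Suc n) = D * D * t"
    unfolding u_def v_def D_def by (simp add: algebra_simps)
  ultimately show ?thesis using D2 by auto
qed

lemma key:
  fixes s t :: int
  assumes s0: "0 < s" and s1: "s < int (cf_q \<alpha> (Suc j))"
    and ex: "cf_a \<alpha> (j+2) = 1 \<longrightarrow> s \<noteq> int (cf_q \<alpha> j)"
  shows "\<bar>of_int s * \<alpha> - of_int t\<bar> \<ge> 2 * dd (j+1) + dd (j+2)"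
proof -
  obtain u v where uv: "s = u * int (cf_q \<alpha> j) + v * int (cf_q \<alpha> (Suc j))"
    "t = u * cf_p \<alpha> j + v * cf_p \<alpha> (Suc j)" using decomp by blast
  have "of_int s * \<alpha> - of_int t = of_int u * (real (cf_q \<alpha> j) * \<alpha> - of_int (cf_p \<alpha> j))
      + of_int v * (real (cf_q \<alpha> (Suc j)) * \<alpha> - of_int (cf_p \<alpha> (Suc j)))"
    using uv by (simp add: algebra_simps)
  also have "\<dots> = (-1)^j * (of_int u * dd j - of_int v * dd (Suc j))"
    unfolding eps by (simp add: algebra_simps)
  finally have "\<bar>of_int s * \<alpha> - of_int t\<bar> = \<bar>of_int u * dd j - of_int v * dd (Suc j)\<bar>"
    by (simp add: abs_mult)
  moreover
  have r: "dd j = real (cf_a \<alpha> (j+2)) * dd (j+1) + dd (j+2)" by (rule dd_rec)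
  have a1: "real (cf_a \<alpha> (j+2)) \<ge> 1" using a_props(2)[of "Suc j"] by simp
  have p: "dd j > 0" "dd (Suc j) > 0" "dd (j+2) > 0" using dd_pos by auto
  have "real (cf_a \<alpha> (j+2)) * dd (j+1) \<ge> 1 * dd (j+1)"
    using p by (intro mult_right_mono[OF a1]) auto
  then have ge1: "dd j \<ge> dd (j+1) + dd (j+2)" using r by linarith
  have q0: "int (cf_q \<alpha> j) \<ge> 1" "int (cf_q \<alpha> (Suc j)) \<ge> 1" using q_pos by auto
  have "\<bar>of_int u * dd j - of_int v * dd (Suc j)\<bar> \<ge> 2 * dd (j+1) + dd (j+2)"
  proof -
    consider "u \<ge> 1 \<and> v \<le> -1" | "u \<le> -1 \<and> v \<ge> 1" | "u \<ge> 2 \<and> v = 0" | "u = 1 \<and> v = 0"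
      | "u = 0" | "u \<ge> 1 \<and> v \<ge> 1" | "u \<le> -1 \<and> v \<le> 0" by linarith
    then show ?thesis
    proof cases
      case 1
      have "of_int u * dd j \<ge> dd j" using 1 p by simp
      moreover have "- of_int v * dd (Suc j) \<ge> dd (Suc j)" using 1 p ge_helper[of "- of_int v" "dd (Suc j)"] by simp
      ultimately show ?thesis using ge1 by simp
    next
      case 2
      have "- of_int u * dd j \<ge> dd j" using 2 p ge_helper[of "- of_int u" "dd j"] by simp
      moreover have "of_int v * dd (Suc j) \<ge> dd (Suc j)" using 2 p by simp
      ultimately show ?thesis using ge1 by simp
    next
      case 3
      have "of_int u * dd j \<ge> 2 * dd j" using 3 p by simp
      moreover have "\<bar>of_int u * dd j - of_int v * dd (Suc j)\<bar> = of_int u * dd j" using 3 p by simp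
      ultimately show ?thesis using ge1 p by linarith
    next
      case 4
      then have "s = int (cf_q \<alpha> j)" using uv by simp
      then have "cf_a \<alpha> (j+2) \<noteq> 1" using ex by auto
      then have "real (cf_a \<alpha> (j+2)) \<ge> 2" using a_props(2)[of "Suc j"] by simp
      then have "real (cf_a \<alpha> (j+2)) * dd (j+1) \<ge> 2 * dd (j+1)"
        using p by (intro mult_right_mono) auto
      then have "dd j \<ge> 2 * dd (j+1) + dd (j+2)" using r by linarith
      then show ?thesis using 4 by simp
    next
      case 5
      then have sv: "s = v * int (cf_q \<alpha> (Suc j))" using uv by simp
      moreover have False
      proof (cases "v \<ge> 1")
        case True
        then have "v * int (cf_q \<alpha> (Suc j)) \<ge> int (cf_q \<alpha> (Suc j))" using q0 by simp
        then show False using s1 sv by simp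
      next
        case False
        then have "v * int (cf_q \<alpha> (Suc j)) \<le> 0" using q0 by (simp add: mult_nonpos_nonneg)
        then show False using s0 sv by simp
      qed
      ultimately show ?thesis by simp
    next
      case 6
      have "1 * 1 \<le> u * int (cf_q \<alpha> j)" using 6 q0 by (intro mult_mono) auto
      then have "u * int (cf_q \<alpha> j) \<ge> 1" by simp
      moreover have "v * int (cf_q \<alpha> (Suc j)) \<ge> int (cf_q \<alpha> (Suc j))" using 6 q0 by simp
      ultimately show ?thesis using uv s1 by simp
    next
      case 7
      have "1 * 1 \<le> (-u) * int (cf_q \<alpha> j)" using 7 q0 by (intro mult_mono) auto
      then have "u * int (cf_q \<alpha> j) \<le> -1" by simp
      moreover have "v * int (cf_q \<alpha> (Suc j)) \<le> 0" using 7 q0 by (simp add: mult_nonpos_nonneg)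
      ultimately show ?thesis using uv s0 by simp
    qed
  qed
  ultimately show ?thesis by simp
qed

end

theorem lemma3p3:
  fixes \<alpha> :: real and k :: nat and m :: int
  assumes irr: "\<alpha> \<notin> \<rat>" and pos: "0 < \<alpha>" and lt1: "\<alpha> < 1"
    and a1: "cf_a \<alpha> 1 \<ge> 2"
    and k: "k \<ge> 1"
    and lo: "int (cf_a \<alpha> (k + 1) * cf_q \<alpha> k) < m"
    and hi: "m < int (cf_q \<alpha> (k + 1))"
    and ne1: "m \<noteq> int (cf_qs \<alpha> (k + 1) (cf_a \<alpha> (k + 1) - 1))"
    and ne2: "cf_a \<alpha> k = 1 \<longrightarrow>
               m \<noteq> int ((cf_a \<alpha> (k + 1) - 1) * cf_q \<alpha> k + 2 * cf_q \<alpha> (k - 1))"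
  shows "dnint (of_int m * \<alpha>) \<ge>
           dnint (real (cf_q \<alpha> (k - 1)) * \<alpha>)
           + (real (cf_a \<alpha> (k + 1)) + 1) * dnint (real (cf_q \<alpha> k) * \<alpha>)"
proof (cases "k = 1")
  case True
  then have e: "k + 1 = Suc (Suc 0)" "k = Suc 0" by simp_all
  have "cf_q \<alpha> (Suc (Suc 0)) = cf_a \<alpha> (Suc (Suc 0)) * cf_q \<alpha> (Suc 0) + cf_q \<alpha> 0"
    by (simp only: cf_q.simps)
  then have "cf_q \<alpha> (k+1) = cf_a \<alpha> (k+1) * cf_q \<alpha> k + 1" unfolding e by simp
  then show ?thesis using lo hi by linarith
next
  case False
  define j where "j = k - 2"
  have kj: "k = Suc (Suc j)" using k False unfolding j_def by arith
  define a where "a = cf_a \<alpha> (k+1)"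
  have aa: "a \<ge> 1" unfolding a_def using a_props(2)[OF irr pos lt1, of k] by simp
  have qk1: "cf_q \<alpha> (k+1) = a * cf_q \<alpha> k + cf_q \<alpha> (Suc j)" by (simp add: kj a_def)
  define s where "s = int (cf_q \<alpha> (k+1)) - m"
  have s0: "0 < s" using hi s_def by simp
  have s1: "s < int (cf_q \<alpha> (Suc j))" using lo qk1 s_def by (simp add: a_def)
  have km1': "k - 1 = Suc j" using kj by simp
  have ex: "cf_a \<alpha> (j+2) = 1 \<longrightarrow> s \<noteq> int (cf_q \<alpha> j)"
  proof
    assume h: "cf_a \<alpha> (j+2) = 1"
    then have qk: "cf_q \<alpha> k = cf_q \<alpha> (Suc j) + cf_q \<alpha> j" by (simp add: kj)
    have "int ((a - 1) * cf_q \<alpha> k + 2 * cf_q \<alpha> (k - 1))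
       = (int a - 1) * int (cf_q \<alpha> k) + 2 * int (cf_q \<alpha> (Suc j))"
      using aa unfolding km1' by (simp add: of_nat_diff)
    moreover have "cf_a \<alpha> k = 1" using h kj by simp
    ultimately have "m \<noteq> (int a - 1) * int (cf_q \<alpha> k) + 2 * int (cf_q \<alpha> (Suc j))"
      using ne2 unfolding a_def by metis
    then show "s \<noteq> int (cf_q \<alpha> j)" using qk qk1 s_def by (simp add: algebra_simps)
  qed
  define T where "T = dd \<alpha> (j+1) + (real a + 1) * dd \<alpha> (j+2)"
  have r: "dd \<alpha> (j+1) = real a * dd \<alpha> (j+2) + dd \<alpha> (j+3)"
  proof -
    have "dd \<alpha> (Suc j) = real (cf_a \<alpha> (Suc j + 2)) * dd \<alpha> (Suc j + 1) + dd \<alpha> (Suc j + 2)"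
      by (rule dd_rec[OF irr pos lt1])
    then show ?thesis unfolding a_def kj by (simp add: numeral_3_eq_3 numeral_2_eq_2)
  qed
  have k1: "k + 1 = j + 3" using kj by simp
  have lhs: "dnint (of_int m * \<alpha>) \<ge> T"
  proof (rule dnint_ge)
    fix N :: int
    have K: "\<bar>of_int s * \<alpha> - of_int (cf_p \<alpha> (k+1) - N)\<bar> \<ge> 2 * dd \<alpha> (j+1) + dd \<alpha> (j+2)"
      by (rule key[OF irr pos lt1 s0 s1 ex])
    have E: "real (cf_q \<alpha> (k+1)) * \<alpha> - of_int (cf_p \<alpha> (k+1)) = (-1)^(k+1) * dd \<alpha> (k+1)"
      by (rule eps[OF irr pos lt1])
    have aE: "\<bar>real (cf_q \<alpha> (k+1)) * \<alpha> - of_int (cf_p \<alpha> (k+1))\<bar> = dd \<alpha> (j+3)"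
    proof -
      have "\<bar>real (cf_q \<alpha> (k+1)) * \<alpha> - of_int (cf_p \<alpha> (k+1))\<bar> = dd \<alpha> (k+1)"
        unfolding E using dd_pos[OF irr pos lt1, of "k+1"] by (simp add: abs_mult)
      then show ?thesis by (simp only: k1)
    qed
    have "of_int m * \<alpha> - of_int N = (real (cf_q \<alpha> (k+1)) * \<alpha> - of_int (cf_p \<alpha> (k+1)))
       - (of_int s * \<alpha> - of_int (cf_p \<alpha> (k+1) - N))"
      by (simp add: s_def algebra_simps)
    then have "\<bar>of_int m * \<alpha> - of_int N\<bar> \<ge> \<bar>of_int s * \<alpha> - of_int (cf_p \<alpha> (k+1) - N)\<bar> - dd \<alpha> (j+3)"
      using aE abs_triangle_ineq2_sym[of "of_int s * \<alpha> - of_int (cf_p \<alpha> (k+1) - N)"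
          "real (cf_q \<alpha> (k+1)) * \<alpha> - of_int (cf_p \<alpha> (k+1))"] by linarith
    then show "\<bar>of_int m * \<alpha> - of_int N\<bar> \<ge> T" using K r unfolding T_def by (simp add: algebra_simps)
  qed
  have km1: "k - 1 = j + 1" "k = j + 2" using kj by simp_all
  have d1: "dnint (real (cf_q \<alpha> (k - 1)) * \<alpha>) \<le> dd \<alpha> (j+1)"
    using dnint_le[of "real (cf_q \<alpha> (j+1)) * \<alpha>" "cf_p \<alpha> (j+1)"]
      eps[OF irr pos lt1, of "j+1"] dd_lt1[OF irr pos lt1, of "j+1"] dd_pos[OF irr pos lt1, of "j+1"]
    unfolding km1 by (simp add: abs_mult)
  have d2: "dnint (real (cf_q \<alpha> k) * \<alpha>) \<le> dd \<alpha> (j+2)"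
    using dnint_le[of "real (cf_q \<alpha> (j+2)) * \<alpha>" "cf_p \<alpha> (j+2)"]
      eps[OF irr pos lt1, of "j+2"] dd_lt1[OF irr pos lt1, of "j+2"] dd_pos[OF irr pos lt1, of "j+2"]
    unfolding km1 by (simp add: abs_mult)
  have "(real a + 1) * dnint (real (cf_q \<alpha> k) * \<alpha>) \<le> (real a + 1) * dd \<alpha> (j+2)"
    using d2 by (intro mult_left_mono) auto
  then show ?thesis using lhs d1 unfolding T_def a_def by linarith
qed

end
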